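(* Let $(X,d)$ be a compact metric space and $f_{1,\infty}$ a sequence of continuous self-maps of $X$. If $(\mathcal{M}(X),\widetilde{f}_{1,\infty})$ is topologically transitive, then $(X,f_{1,\infty})$ is topologically transitive.
   Context: For $f_{1,\infty}=\{f_n\}_{n\ge1}$ write $f_1^n=f_n\circ\cdots\circ f_1$. $\mathcal{M}(X)$ is the space of Borel probability measures on $X$ with the weak$^*$ topology, and $\widetilde{f}_1^n(\mu)(A)=\mu((f_1^n)^{-1}(A))$ for Borel $A$. A non-autonomous system $(Y,g_{1,\infty})$ is topologically transitive if for every pair of non-empty open sets $U,V$ there is $n\in\mathbb{N}$ with $g_1^n(U)\cap V\ne\emptyset$. *)

theory Defs
  imports "HOL-Probability.Probability"
begin

fun iter_comp :: "(nat \<Rightarrow> 'a \<Rightarrow> 'a) \<Rightarrow> nat \<Rightarrow> 'a \<Rightarrow> 'a" where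
  "iter_comp f 0 = id"
| "iter_comp f (Suc n) = f (Suc n) \<circ> iter_comp f n"

definition borel_prob_measures :: "'a::metric_space set \<Rightarrow> 'a measure set" where
  "borel_prob_measures X =
     {\<mu>. prob_space \<mu> \<and> sets \<mu> = sets (restrict_space borel X)}"

definition weak_star_topology :: "'a::metric_space set \<Rightarrow> 'a measure topology" where
  "weak_star_topology X = topology_generated_by
     {{\<mu> \<in> borel_prob_measures X. (\<integral>x. g x \<partial>\<mu>) \<in> U} | g U.
        continuous_on X g \<and> open (U :: real set)}"

definition push_measure :: "'a::metric_space set \<Rightarrow> ('a \<Rightarrow> 'a) \<Rightarrow> 'a measure \<Rightarrow> 'a measure" where
  "push_measure X h \<mu> = distr \<mu> (restrict_space borel X) h"

text \<open>Topological transitivity of a non-autonomous system, given through its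
  composed maps G n = g_1^n (n >= 1) on the topological space T.\<close>
definition nonauto_transitive :: "'b topology \<Rightarrow> (nat \<Rightarrow> 'b \<Rightarrow> 'b) \<Rightarrow> bool" where
  "nonauto_transitive T G \<longleftrightarrow>
     (\<forall>U V. openin T U \<and> openin T V \<and> U \<noteq> {} \<and> V \<noteq> {} \<longrightarrow>
        (\<exists>n\<ge>1. G n ` U \<inter> V \<noteq> {}))"

end

theory Submission
  imports Defs
begin

lemma space_bpm:
  assumes "sets \<mu> = sets (restrict_space borel X)"
  shows "space \<mu> = X"
  using sets_eq_imp_space_eq[OF assms] by (simp add: space_restrict_space)

lemma bump_props:
  fixes x :: "'a::metric_space" and r :: real
  assumes "r > 0"
  defines "g \<equiv> (\<lambda>z. max 0 (1 - dist z x / r))"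
  shows "continuous_on UNIV g" "g x = 1" "\<And>z. 0 \<le> g z" "\<And>z. g z \<le> indicator (ball x r) z"
proof -
  show "continuous_on UNIV g" unfolding g_def by (intro continuous_intros) (use assms in auto)
  show "g x = 1" unfolding g_def by simp
  show "\<And>z. 0 \<le> g z" unfolding g_def by simp
  fix z
  show "g z \<le> indicator (ball x r) z"
  proof (cases "dist z x < r")
    case True then show ?thesis unfolding g_def using assms
      by (auto simp: indicator_def dist_commute field_simps)
  next
    case False then show ?thesis unfolding g_def using assms
      by (auto simp: indicator_def dist_commute field_simps)
  qed
qed

lemma integral_le_measure:
  fixes g :: "'a::metric_space \<Rightarrow> real"
  assumes "prob_space \<mu>" "sets \<mu> = sets (restrict_space borel X)"
    and "continuous_on UNIV g" "\<And>z. 0 \<le> g z" "\<And>z. g z \<le> indicator B z" "open B"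
  shows "(\<integral>z. g z \<partial>\<mu>) \<le> measure \<mu> (B \<inter> X)"
proof -
  interpret prob_space \<mu> by fact
  have sp: "space \<mu> = X" using space_bpm[OF assms(2)] .
  have gm: "g \<in> borel_measurable \<mu>"
    using borel_measurable_continuous_on_restrict[OF continuous_on_subset[OF assms(3)], of X]
    by (simp add: measurable_cong_sets[OF assms(2) refl])
  have BX: "B \<inter> X \<in> sets \<mu>"
    using assms(2,6) by (auto simp: sets_restrict_space)
  have ig: "integrable \<mu> g"
  proof (rule integrable_const_bound[where B=1])
    show "AE x in \<mu>. norm (g x) \<le> 1"
      using assms(4,5) by (auto intro!: AE_I2 order_trans[OF _ indicator_le_1])
  qed (fact gm)
  have "(\<integral>z. g z \<partial>\<mu>) \<le> (\<integral>z. indicator (B \<inter> X) z \<partial>\<mu>)"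
  proof (rule integral_mono)
    show "integrable \<mu> (indicator (B \<inter> X) :: _ \<Rightarrow> real)"
      using BX by (intro integrable_real_indicator) (auto simp: less_top[symmetric])
    fix z assume "z \<in> space \<mu>"
    then show "g z \<le> indicator (B \<inter> X) z" using assms(5)[of z] sp
      by (auto simp: indicator_def)
  qed (fact ig)
  also have "\<dots> = measure \<mu> (B \<inter> X)" using BX by simp
  finally show ?thesis .
qed

lemma iter_comp_props:
  assumes "\<And>n. n \<ge> 1 \<Longrightarrow> continuous_on X (f n)"
    and "\<And>n. n \<ge> 1 \<Longrightarrow> f n ` X \<subseteq> X"
  shows "continuous_on X (iter_comp f n) \<and> iter_comp f n ` X \<subseteq> X"
proof (induction n)
  case 0 then show ?case by (simp add: continuous_on_id)
next
  case (Suc n)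
  have c: "continuous_on X (f (Suc n) \<circ> iter_comp f n)"
    using Suc assms[of "Suc n"] by (intro continuous_on_compose) (auto intro: continuous_on_subset)
  then show ?case using Suc assms(2)[of "Suc n"] by auto
qed

theorem corollary3p1:
  fixes X :: "'a::metric_space set" and f :: "nat \<Rightarrow> 'a \<Rightarrow> 'a"
  assumes "compact X"
    and "\<And>n. n \<ge> 1 \<Longrightarrow> continuous_on X (f n)"
    and "\<And>n. n \<ge> 1 \<Longrightarrow> f n ` X \<subseteq> X"
    and "nonauto_transitive (weak_star_topology X)
           (\<lambda>n. push_measure X (iter_comp f n))"
  shows "nonauto_transitive (top_of_set X) (iter_comp f)"
  unfolding nonauto_transitive_def
proof (intro allI impI)
  fix U V assume UV: "openin (top_of_set X) U \<and> openin (top_of_set X) V \<and> U \<noteq> {} \<and> V \<noteq> {}"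
  obtain x where x: "x \<in> U" using UV by blast
  obtain y where y: "y \<in> V" using UV by blast
  have UX: "U \<subseteq> X" "V \<subseteq> X" using UV openin_imp_subset by blast+
  obtain r where r: "r > 0" "ball x r \<inter> X \<subseteq> U"
    using UV x by (force simp: openin_contains_ball)
  obtain s where s: "s > 0" "ball y s \<inter> X \<subseteq> V"
    using UV y by (force simp: openin_contains_ball)
  define g where "g \<equiv> (\<lambda>z. max 0 (1 - dist z x / r))"
  define h where "h \<equiv> (\<lambda>z. max 0 (1 - dist z y / s))"
  have gp: "continuous_on UNIV g" "g x = 1" "\<And>z. 0 \<le> g z" "\<And>z. g z \<le> indicator (ball x r) z"
    unfolding g_def using bump_props[OF r(1), where x=x] by auto
  have hp: "continuous_on UNIV h" "h y = 1" "\<And>z. 0 \<le> h z" "\<And>z. h z \<le> indicator (ball y s) z"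
    unfolding h_def using bump_props[OF s(1), where x=y] by auto
  define \<UU> where "\<UU> = {\<mu> \<in> borel_prob_measures X. (\<integral>z. g z \<partial>\<mu>) \<in> {1/2<..}}"
  define \<VV> where "\<VV> = {\<mu> \<in> borel_prob_measures X. (\<integral>z. h z \<partial>\<mu>) \<in> {1/2<..}}"
  have cg: "continuous_on X g" using continuous_on_subset[OF gp(1)] by blast
  have oU: "openin (weak_star_topology X) \<UU>" unfolding weak_star_topology_def \<UU>_def
    apply (rule topology_generated_by_Basis)
    apply (rule CollectI)
    apply (rule exI[of _ g], rule exI[of _ "{1/2<..}"])
    using cg by simp
  have ch: "continuous_on X h" using continuous_on_subset[OF hp(1)] by blast
  have oV: "openin (weak_star_topology X) \<VV>" unfolding weak_star_topology_def \<VV>_def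
    apply (rule topology_generated_by_Basis)
    apply (rule CollectI)
    apply (rule exI[of _ h], rule exI[of _ "{1/2<..}"])
    using ch by simp
  define M where "M = restrict_space borel X"
  have spM: "space M = X" by (simp add: M_def space_restrict_space)
  have gM: "g \<in> borel_measurable M" "h \<in> borel_measurable M"
    unfolding M_def using borel_measurable_continuous_on_restrict continuous_on_subset gp(1) hp(1)
    by blast+
  have xX: "x \<in> X" "y \<in> X" using x y UX by auto
  have "return M x \<in> \<UU>" unfolding \<UU>_def borel_prob_measures_def
    using prob_space_return[of x M] xX spM gM integral_return[of x M g] gp(2)
    by (simp add: M_def g_def)
  moreover have "return M y \<in> \<VV>" unfolding \<VV>_def borel_prob_measures_def
    using prob_space_return[of y M] xX spM gM integral_return[of y M h] hp(2)
    by (simp add: M_def h_def)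
  ultimately obtain n \<mu> where n: "n \<ge> 1" "\<mu> \<in> \<UU>" "push_measure X (iter_comp f n) \<mu> \<in> \<VV>"
    using assms(4) oU oV unfolding nonauto_transitive_def by blast
  define F where "F = iter_comp f n"
  have Fp: "continuous_on X F" "F ` X \<subseteq> X"
    using iter_comp_props[OF assms(2,3)] F_def by auto
  have \<mu>: "prob_space \<mu>" "sets \<mu> = sets M" using n(2) unfolding \<UU>_def borel_prob_measures_def M_def
    by auto
  interpret P: prob_space \<mu> by fact
  have sp: "space \<mu> = X" using space_bpm \<mu>(2) M_def by blast
  have Fm: "F \<in> measurable \<mu> M"
    unfolding measurable_cong_sets[OF \<mu>(2) refl] unfolding M_def
    by (rule measurable_restrict_space2)
       (use Fp borel_measurable_continuous_on_restrict in \<open>auto simp: space_restrict_space\<close>)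
  have m1: "measure \<mu> (ball x r \<inter> X) > 1/2"
    using integral_le_measure[OF \<mu>(1) \<mu>(2)[unfolded M_def] gp(1,3,4)] n(2)
    unfolding \<UU>_def by force
  have pv: "push_measure X F \<mu> \<in> \<VV>" using n(3) F_def by simp
  have ps: "push_measure X F \<mu> = distr \<mu> M F" unfolding push_measure_def M_def by simp
  have BY: "ball y s \<inter> X \<in> sets M" unfolding M_def by (auto simp: sets_restrict_space)
  have "(\<integral>z. h z \<partial>push_measure X F \<mu>) \<le> measure (push_measure X F \<mu>) (ball y s \<inter> X)"
    using integral_le_measure[of "push_measure X F \<mu>" X h "ball y s"] hp(1,3,4) pv
    unfolding \<VV>_def borel_prob_measures_def by auto
  then have m2: "measure \<mu> (F -` (ball y s \<inter> X) \<inter> X) > 1/2"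
    using pv unfolding \<VV>_def ps measure_distr[OF Fm BY] sp by auto
  have A1: "ball x r \<inter> X \<in> sets \<mu>" using \<mu>(2) unfolding M_def by (auto simp: sets_restrict_space)
  have A2: "F -` (ball y s \<inter> X) \<inter> X \<in> sets \<mu>" using measurable_sets[OF Fm BY] sp by simp
  have "(ball x r \<inter> X) \<inter> (F -` (ball y s \<inter> X) \<inter> X) \<noteq> {}"
  proof
    assume e: "(ball x r \<inter> X) \<inter> (F -` (ball y s \<inter> X) \<inter> X) = {}"
    have "measure \<mu> ((ball x r \<inter> X) \<union> (F -` (ball y s \<inter> X) \<inter> X))
          = measure \<mu> (ball x r \<inter> X) + measure \<mu> (F -` (ball y s \<inter> X) \<inter> X)"
      using P.finite_measure_Union[OF A1 A2] e by simp
    moreover have "measure \<mu> ((ball x r \<inter> X) \<union> (F -` (ball y s \<inter> X) \<inter> X)) \<le> 1"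
      by (rule P.prob_le_1)
    ultimately show False using m1 m2 by simp
  qed
  then obtain z where "z \<in> ball x r \<inter> X" "F z \<in> ball y s \<inter> X" by blast
  then have "z \<in> U" "F z \<in> V" using r s by auto
  then show "\<exists>n\<ge>1. iter_comp f n ` U \<inter> V \<noteq> {}" using n(1) F_def by blast
qed

end
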